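(* Let $\mathfrak L_1,\dots,\mathfrak L_n,\mathfrak L$ be complete lattices, let $(\mathcal F_\alpha)_{\alpha\in\mathcal O}$ with $\mathcal F_\alpha:\mathfrak L_1\times\dots\times\mathfrak L_n\to(\mathfrak L\to^+\mathfrak L)$ be a family that is $\limsup$-pushable in all arguments, and let $\phi:\mathcal O\to\mathcal O$ be monotone. Then for every nonzero limit ordinal $\lambda\in\mathcal O$ and all $\vec{\mathcal G}=(\mathcal G_1,\dots,\mathcal G_n)$ with $\mathcal G_i:\mathcal O\to\mathfrak L_i$, $$\limsup_{\alpha\to\lambda}\nu^{\phi(\alpha)}\big(\mathcal F_\alpha(\vec{\mathcal G}_\alpha)\big)\sqsubseteq\nu^{\liminf_\lambda\phi}\big(\mathcal F_\lambda(\limsup_\lambda\vec{\mathcal G})\big).$$ If moreover $\phi$ is affine, then even $$\limsup_{\alpha\to\lambda}\nu^{\phi(\alpha)}\big(\mathcal F_\alpha(\vec{\mathcal G}_\alpha)\big)\sqsubseteq\nu^{\phi(\lambda)}\big(\mathcal F_\lambda(\limsup_\lambda\vec{\mathcal G})\big).$$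
   Context: $\mathcal O$ is the set of ordinals $\le\top_{\mathsf{ord}}$ for a fixed ordinal $\top_{\mathsf{ord}}$ ($=\beth_\omega$). For $f:\mathcal O\to\mathfrak L$ into a complete lattice and a nonzero limit $\lambda$: $\liminf_\lambda f=\liminf_{\alpha\to\lambda}f(\alpha)=\sup_{\alpha_0<\lambda}\inf_{\alpha_0\le\alpha<\lambda}f(\alpha)$, $\limsup_\lambda f=\limsup_{\alpha\to\lambda}f(\alpha)=\inf_{\alpha_0<\lambda}\sup_{\alpha_0\le\alpha<\lambda}f(\alpha)$; on products of lattices, componentwise. $\mathfrak L\to^+\mathfrak L$ is the set of monotone maps. For $f:\mathfrak L\to\mathfrak L$, $g\in\mathfrak L$: $f^0(g)=g$, $f^{\alpha+1}(g)=f(f^\alpha(g))$, $f^\lambda(g)=\limsup_{\alpha\to\lambda}f^\alpha(g)$; $\nu^\alpha f:=f^\alpha(\top)$. A family $(\mathcal F_\alpha)_{\alpha\in\mathcal O}$ of maps $\mathfrak K\to\mathfrak K'$ is $\limsup$-pushable if for every $\mathcal G:\mathcal O\to\mathfrak K$ and nonzero limit $\lambda$: $\limsup_{\alpha\to\lambda}\mathcal F_\gamma(\mathcal G_\alpha)\sqsubseteq\mathcal F_\gamma(\limsup_{\alpha\to\lambda}\mathcal G_\alpha)$ for all $\gamma\in\mathcal O$, and $\limsup_{\alpha\to\lambda}\mathcal F_\alpha(\mathcal G_\alpha)\sqsubseteq\mathcal F_\lambda(\limsup_{\alpha\to\lambda}\mathcal G_\alpha)$. "$\limsup$-pushable in all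 arguments" means the family $(\vec{\mathcal G},\mathcal X)\mapsto\mathcal F_\alpha(\vec{\mathcal G})(\mathcal X)$ on $\mathfrak L_1\times\dots\times\mathfrak L_n\times\mathfrak L$ is $\limsup$-pushable. A function $\phi:\mathcal O\to\mathcal O$ is affine if $\phi(\alpha)=\min\{b\alpha+\beta,\top_{\mathsf{ord}}\}$ for some $b\in\{0,1\}$ and $\beta\in\mathcal O$. *)

theory Defs
  imports Main "HOL-Library.Product_Order"
begin

text \<open>The ordinal domain O = ordinals up to a top ordinal is modelled by an arbitrary
  type 'o that is well-ordered and a complete linear order (such a type is order-isomorphic
  to the ordinals \<le> some ordinal, namely its top element).\<close>

definition nonzero_limit :: "'o::{complete_linorder,wellorder} \<Rightarrow> bool" where
  "nonzero_limit l \<longleftrightarrow> bot < l \<and> (\<forall>b<l. \<exists>c. b < c \<and> c < l)"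

definition olimsup :: "('o::{complete_linorder,wellorder} \<Rightarrow> 'a::complete_lattice) \<Rightarrow> 'o \<Rightarrow> 'a" where
  "olimsup f l = (INF a0\<in>{..<l}. SUP a\<in>{a0..<l}. f a)"

definition oliminf :: "('o::{complete_linorder,wellorder} \<Rightarrow> 'a::complete_lattice) \<Rightarrow> 'o \<Rightarrow> 'a" where
  "oliminf f l = (SUP a0\<in>{..<l}. INF a\<in>{a0..<l}. f a)"

definition osuc :: "'o::{complete_linorder,wellorder} \<Rightarrow> 'o" where
  "osuc b = (if b = top then top else (LEAST c. b < c))"

text \<open>Transfinite iteration: f^0 g = g, f^(a+1) g = f (f^a g),
  f^l g = limsup_{a \<rightarrow> l} f^a g.  For a successor a, its predecessor is Sup {..<a}.\<close>
definition oiter :: "('a::complete_lattice \<Rightarrow> 'a) \<Rightarrow> 'a \<Rightarrow> 'o::{complete_linorder,wellorder} \<Rightarrow> 'a" where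
  "oiter f g = wfrec {(x, y). x < y}
     (\<lambda>rec a. if a = bot then g
              else if Sup {..<a} < a then f (rec (Sup {..<a}))
              else olimsup rec a)"

definition onu :: "'o::{complete_linorder,wellorder} \<Rightarrow> ('a::complete_lattice \<Rightarrow> 'a) \<Rightarrow> 'a" where
  "onu a f = oiter f top a"

text \<open>Ordinal addition a + b truncated at the top element, by recursion on b.\<close>
definition oadd :: "'o::{complete_linorder,wellorder} \<Rightarrow> 'o \<Rightarrow> 'o" where
  "oadd a = wfrec {(x, y). x < y}
     (\<lambda>rec b. if b = bot then a
              else if Sup {..<b} < b then osuc (rec (Sup {..<b}))
              else Sup (rec ` {..<b}))"

definition affine :: "('o::{complete_linorder,wellorder} \<Rightarrow> 'o) \<Rightarrow> bool" where
  "affine phi \<longleftrightarrow> (\<exists>b::nat. \<exists>beta. b \<in> {0,1} \<and>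
      phi = (\<lambda>a. if b = 0 then beta else oadd a beta))"

definition limsup_pushable :: "('o::{complete_linorder,wellorder} \<Rightarrow> 'k::complete_lattice \<Rightarrow> 'k2::complete_lattice) \<Rightarrow> bool" where
  "limsup_pushable F \<longleftrightarrow> (\<forall>G l. nonzero_limit l \<longrightarrow>
      (\<forall>c. olimsup (\<lambda>a. F c (G a)) l \<le> F c (olimsup G l)) \<and>
      olimsup (\<lambda>a. F a (G a)) l \<le> F l (olimsup G l))"

end

theory Submission
  imports Defs
begin


lemma olimsup_cong:
  assumes "\<And>x. x < a \<Longrightarrow> f x = g x"
  shows "olimsup f a = olimsup g a"
  unfolding olimsup_def
  by (rule INF_cong[OF refl], rule SUP_cong[OF refl]) (auto intro: assms)

lemma oiter_unfold:
  fixes f :: "'a::complete_lattice \<Rightarrow> 'a" and a :: "'o::{complete_linorder,wellorder}"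
  shows "oiter f g a = (if a = bot then g else if Sup {..<a} < a then f (oiter f g (Sup {..<a}))
     else olimsup (oiter f g) a)"
proof -
  have "adm_wf {(x, y). x < (y::'o::{complete_linorder,wellorder})}
     (\<lambda>rec a. if a = bot then g
              else if Sup {..<a} < a then f (rec (Sup {..<a}))
              else olimsup rec a)"
    unfolding adm_wf_def
  proof (intro allI impI)
    fix fa ga :: "'o \<Rightarrow> 'a" and x :: 'o
    assume h: "\<forall>z. (z, x) \<in> {(x, y). x < y} \<longrightarrow> fa z = ga z"
    then have "olimsup fa x = olimsup ga x" by (intro olimsup_cong) auto
    moreover have "Sup {..<x} < x \<Longrightarrow> fa (Sup {..<x}) = ga (Sup {..<x})" using h by auto
    ultimately show "(if x = bot then g else if Sup {..<x} < x then f (fa (Sup {..<x})) else olimsup fa x) =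
        (if x = bot then g else if Sup {..<x} < x then f (ga (Sup {..<x})) else olimsup ga x)" by simp
  qed
  from fun_cong[OF wfrec_fixpoint[OF wellorder_class.wf this], of a] show ?thesis
    unfolding oiter_def[symmetric] by simp
qed

lemma oadd_unfold:
  fixes a b :: "'o::{complete_linorder,wellorder}"
  shows "oadd a b = (if b = bot then a else if Sup {..<b} < b then osuc (oadd a (Sup {..<b}))
     else Sup (oadd a ` {..<b}))"
proof -
  have "adm_wf {(x, y). x < (y::'o::{complete_linorder,wellorder})}
     (\<lambda>rec b. if b = bot then a
              else if Sup {..<b} < b then osuc (rec (Sup {..<b}))
              else Sup (rec ` {..<b}))"
    unfolding adm_wf_def by (auto simp: image_def)
  from fun_cong[OF wfrec_fixpoint[OF wellorder_class.wf this], of b] show ?thesis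
    unfolding oadd_def[symmetric] by simp
qed

lemma olimsup_ge_INF:
  "(INF g\<in>{..<a}. f g) \<le> olimsup f a"
  unfolding olimsup_def
  by (rule INF_mono) (auto intro!: SUP_upper2)

lemma olimsup_tail_mono:
  assumes "a0 < l" "\<And>x. a0 \<le> x \<Longrightarrow> x < l \<Longrightarrow> f x \<le> g x"
  shows "olimsup f l \<le> olimsup g l"
  unfolding olimsup_def
proof (rule INF_greatest)
  fix b assume b: "b \<in> {..<l}"
  let ?b = "max a0 b"
  have "?b < l" using b assms by auto
  then have "(INF a0\<in>{..<l}. SUP a\<in>{a0..<l}. f a) \<le> (SUP a\<in>{?b..<l}. f a)"
    by (intro INF_lower) auto
  also have "\<dots> \<le> (SUP a\<in>{?b..<l}. g a)"
    proof (rule SUP_mono)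
    fix x assume "x \<in> {?b..<l}"
    then show "\<exists>m\<in>{?b..<l}. f x \<le> g m" using assms(2)[of x] by auto
  qed
  also have "\<dots> \<le> (SUP a\<in>{b..<l}. g a)"
    by (rule SUP_subset_mono) auto
  finally show "(INF a0\<in>{..<l}. SUP a\<in>{a0..<l}. f a) \<le> (SUP a\<in>{b..<l}. g a)" .
qed

lemma olimsup_const:
  assumes "bot < l" shows "olimsup (\<lambda>_. c) l = c"
proof -
  have "\<And>b. b < l \<Longrightarrow> (SUP a\<in>{b..<l}. c) = c" by (subst SUP_const) auto
  then have "olimsup (\<lambda>_. c) l = (INF b\<in>{..<l}. c)"
    unfolding olimsup_def by (intro INF_cong) auto
  also have "\<dots> = c" using assms by (subst INF_const) auto
  finally show ?thesis .
qed

lemma oliminf_mono_eq: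
  assumes "mono phi" "bot < l"
  shows "oliminf phi l = Sup (phi ` {..<l})"
  unfolding oliminf_def
proof (rule SUP_cong[OF refl])
  fix b assume "b \<in> {..<l}"
  then show "(INF a\<in>{b..<l}. phi a) = phi b"
    using assms(1) by (intro antisym INF_lower INF_greatest) (auto simp: mono_def)
qed



lemma pred_ge:
  fixes x a :: "'o::{complete_linorder,wellorder}"
  shows "x < a \<Longrightarrow> x \<le> Sup {..<a}"
  by (rule Sup_upper) auto

lemma Sup_lessThan_le:
  fixes a :: "'o::{complete_linorder,wellorder}"
  shows "Sup {..<a} \<le> a"
  by (rule Sup_least) auto

lemma osuc_props:
  fixes c :: "'o::{complete_linorder,wellorder}"
  assumes "c \<noteq> top"
  shows "c < osuc c" "Sup {..<osuc c} = c" "osuc c \<noteq> bot"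
proof -
  have ct: "c < top" using assms top.not_eq_extremum by blast
  have os: "osuc c = (LEAST x. c < x)" using assms by (simp add: osuc_def)
  show c1: "c < osuc c" unfolding os by (rule LeastI[of _ top]) (rule ct)
  have "\<And>x. x < osuc c \<Longrightarrow> x \<le> c"
    unfolding os using not_less_Least by (metis not_le)
  then show "Sup {..<osuc c} = c" using c1
    by (intro antisym Sup_least Sup_upper) auto
  show "osuc c \<noteq> bot" using c1 by auto
qed

lemma oiter_osuc:
  fixes c :: "'o::{complete_linorder,wellorder}"
  assumes "c \<noteq> top"
  shows "oiter f g (osuc c) = f (oiter f g c)"
  using osuc_props[OF assms] by (subst oiter_unfold) simp

lemma osuc_top: "osuc (top::'o::{complete_linorder,wellorder}) = top"
  by (simp add: osuc_def)

lemma le_osuc: "(c::'o::{complete_linorder,wellorder}) \<le> osuc c"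
  by (cases "c = top") (auto simp: osuc_top dest: osuc_props(1))

lemma osuc_mono:
  fixes x y :: "'o::{complete_linorder,wellorder}"
  assumes "x \<le> y" shows "osuc x \<le> osuc y"
proof (cases "y = top")
  case True then show ?thesis by (simp add: osuc_top)
next
  case False
  then have "x \<noteq> top" using assms top.extremum_unique by blast
  then have "osuc x = (LEAST z. x < z)" by (simp add: osuc_def)
  also have "\<dots> \<le> osuc y" using osuc_props(1)[OF False] assms
    by (intro Least_le) simp
  finally show ?thesis .
qed

lemma oiter_antimono_aux:
  fixes f :: "'a::complete_lattice \<Rightarrow> 'a" and b :: "'o::{complete_linorder,wellorder}"
  assumes mf: "mono f"
  shows "\<forall>a. a \<le> b \<longrightarrow> oiter f top b \<le> oiter f top a"
proof (induction b rule: less_induct)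
  case (less b)
  note outerIH = less.IH
  show ?case
  proof (intro allI impI)
    fix a assume ab: "a \<le> b"
    show "oiter f top b \<le> oiter f top a"
    proof (cases "a = b")
      case True then show ?thesis by simp
    next
      case False
      with ab have ab': "a < b" by simp
      then have bb: "b \<noteq> bot" by auto
      show ?thesis
      proof (cases "Sup {..<b} < b")
        case True
        define p where "p = Sup {..<b}"
        have pb: "p < b" using True p_def by simp
        have ob: "oiter f top b = f (oiter f top p)"
          using bb True by (subst oiter_unfold) (simp add: p_def)
        have "\<forall>a. a \<le> p \<longrightarrow> f (oiter f top p) \<le> oiter f top a"
        proof (intro allI)
          fix a show "a \<le> p \<longrightarrow> f (oiter f top p) \<le> oiter f top a"
          proof (induction a rule: less_induct)
            case (less a)
            show ?case
            proof
              assume ap: "a \<le> p"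
              show "f (oiter f top p) \<le> oiter f top a"
              proof (cases "a = bot")
                case True then show ?thesis by (subst oiter_unfold) simp
              next
                case nb: False
                show ?thesis
                proof (cases "Sup {..<a} < a")
                  case True
                  have "oiter f top p \<le> oiter f top (Sup {..<a})"
                    using outerIH[OF pb] ap True by (meson order.trans order.strict_implies_order)
                  then show ?thesis using nb True mf
                    by (subst (2) oiter_unfold) (simp add: monoD)
                next
                  case False
                  then have "oiter f top a = olimsup (oiter f top) a"
                    using nb by (subst oiter_unfold) simp
                  moreover have "f (oiter f top p) \<le> (INF g\<in>{..<a}. oiter f top g)"
                    using less.IH ap by (auto intro!: INF_greatest)
                  ultimately show ?thesis using olimsup_ge_INF order_trans by metis
                qed
              qed
            qed
          qed
        qed
        then show ?thesis using ob ab' pred_ge p_def by metis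
      next
        case False
        then have "oiter f top b = olimsup (oiter f top) b"
          using bb by (subst oiter_unfold) simp
        also have "\<dots> \<le> (SUP c\<in>{a..<b}. oiter f top c)"
          unfolding olimsup_def using ab' by (intro INF_lower) auto
        also have "\<dots> \<le> oiter f top a"
          using less.IH by (intro SUP_least) auto
        finally show ?thesis .
      qed
    qed
  qed
qed

lemma oiter_antimono:
  fixes f :: "'a::complete_lattice \<Rightarrow> 'a" and b :: "'o::{complete_linorder,wellorder}"
  assumes "mono f" "a \<le> b"
  shows "oiter f top b \<le> oiter f top a"
  using oiter_antimono_aux[OF assms(1)] assms(2) by blast

lemma oiter_Sup:
  fixes f :: "'a::complete_lattice \<Rightarrow> 'a" and S :: "'o::{complete_linorder,wellorder} set"
  assumes mf: "mono f" and ne: "S \<noteq> {}"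
  shows "(INF d\<in>S. oiter f top d) \<le> oiter f top (Sup S)"
proof (cases "Sup S \<in> S")
  case True then show ?thesis by (rule INF_lower)
next
  case False
  obtain d where d: "d \<in> S" using ne by auto
  have lt: "\<And>d. d \<in> S \<Longrightarrow> d < Sup S" using False Sup_upper
    by (metis order_le_less)
  then have nb: "Sup S \<noteq> bot" using d by fastforce
  have "Sup S \<le> Sup {..<Sup S}" using lt by (intro Sup_least Sup_upper) auto
  then have "\<not> Sup {..<Sup S} < Sup S" by simp
  then have "oiter f top (Sup S) = olimsup (oiter f top) (Sup S)"
    using nb oiter_unfold[of f top "Sup S"] by (simp only: if_False simp_thms)
  moreover have "(INF d\<in>S. oiter f top d) \<le> (INF g\<in>{..<Sup S}. oiter f top g)"
  proof (rule INF_greatest)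
    fix g assume "g \<in> {..<Sup S}"
    then obtain d where "d \<in> S" "g < d" using less_Sup_iff by auto
    then show "(INF d\<in>S. oiter f top d) \<le> oiter f top g"
      using oiter_antimono[OF mf, of g d] by (meson INF_lower order.strict_implies_order order_trans)
  qed
  ultimately show ?thesis using olimsup_ge_INF order_trans by metis
qed



lemma nzl_props:
  fixes l :: "'o::{complete_linorder,wellorder}"
  assumes "nonzero_limit l"
  shows "bot < l" "l \<noteq> bot" "Sup {..<l} = l"
proof -
  show "bot < l" "l \<noteq> bot" using assms unfolding nonzero_limit_def by auto
  show "Sup {..<l} = l"
  proof (rule antisym[OF Sup_lessThan_le], rule ccontr)
    assume "\<not> l \<le> Sup {..<l}"
    then have "Sup {..<l} < l" by simp
    then obtain c where "Sup {..<l} < c" "c < l" using assms unfolding nonzero_limit_def by blast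
    then show False using pred_ge[of c l] by simp
  qed
qed

lemma oadd_bot[simp]: "oadd a (bot::'o::{complete_linorder,wellorder}) = a"
  by (simp add: oadd_unfold[of _ bot])

lemma oiter_bot[simp]: "oiter f g (bot::'o::{complete_linorder,wellorder}) = g"
  by (simp add: oiter_unfold[of _ _ bot])

lemma olimsup_pair:
  "olimsup (\<lambda>a. (G a, X a)) l = (olimsup G l, olimsup X l)"
  unfolding olimsup_def by (rule prod_eqI) (simp_all add: fst_INF fst_SUP snd_INF snd_SUP)

lemma olimsup_mono:
  fixes l :: "'o::{complete_linorder,wellorder}"
  assumes "bot < l" "\<And>x. x < l \<Longrightarrow> f x \<le> g x"
  shows "olimsup f l \<le> olimsup g l"
  by (rule olimsup_tail_mono[OF assms(1)]) (use assms(2) in auto)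

lemma oadd_mono1:
  fixes a a' b :: "'o::{complete_linorder,wellorder}"
  assumes "a \<le> a'"
  shows "oadd a b \<le> oadd a' b"
proof (induction b rule: less_induct)
  case (less b)
  show ?case
  proof (cases "b = bot")
    case True then show ?thesis using assms by (simp add: oadd_unfold[of _ b])
  next
    case nb: False
    show ?thesis
    proof (cases "Sup {..<b} < b")
      case True
      then show ?thesis using nb less.IH[OF True]
        by (simp add: oadd_unfold[of _ b] osuc_mono)
    next
      case False
      have "Sup (oadd a ` {..<b}) \<le> Sup (oadd a' ` {..<b})"
        using less.IH by (intro SUP_mono) auto
      then show ?thesis using nb False by (simp add: oadd_unfold[of _ b])
    qed
  qed
qed

context
  fixes F :: "'o::{complete_linorder,wellorder} \<Rightarrow> 'g::complete_lattice \<Rightarrow> 'l::complete_lattice \<Rightarrow> 'l"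
    and G :: "'o \<Rightarrow> 'g" and l :: 'o
  assumes F_mono: "\<And>a G. mono (F a G)"
    and push: "limsup_pushable (\<lambda>a (p :: 'g \<times> 'l). F a (fst p) (snd p))"
    and nzl: "nonzero_limit l"
begin

lemma push_apply:
  "olimsup (\<lambda>a. F a (G a) (X a)) l \<le> F l (olimsup G l) (olimsup X l)"
proof -
  have h: "\<forall>G' l'. nonzero_limit l' \<longrightarrow>
      (\<forall>c. olimsup (\<lambda>a. F c (fst (G' a)) (snd (G' a))) l' \<le> F c (fst (olimsup G' l')) (snd (olimsup G' l'))) \<and>
      olimsup (\<lambda>a. F a (fst (G' a)) (snd (G' a))) l' \<le> F l' (fst (olimsup G' l')) (snd (olimsup G' l'))"
    using push unfolding limsup_pushable_def by simp
  have "olimsup (\<lambda>a. F a (fst (G a, X a)) (snd (G a, X a))) l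
      \<le> F l (fst (olimsup (\<lambda>a. (G a, X a)) l)) (snd (olimsup (\<lambda>a. (G a, X a)) l))"
    using conjunct2[OF h[rule_format, of l "\<lambda>a. (G a, X a)", OF nzl]] by simp
  then show ?thesis by (simp add: olimsup_pair)
qed

lemma lemK:
  "olimsup (\<lambda>a. oiter (F a (G a)) top b) l \<le> oiter (F l (olimsup G l)) top b"
proof (induction b rule: less_induct)
  case (less b)
  have bl: "bot < l" using nzl_props[OF nzl] by simp
  show ?case
  proof (cases "b = bot")
    case True
    then show ?thesis using olimsup_const[OF bl, of top] by (simp add: oiter_unfold[of _ _ b])
  next
    case nb: False
    show ?thesis
    proof (cases "Sup {..<b} < b")
      case True
      let ?p = "Sup {..<b}"
      have "olimsup (\<lambda>a. oiter (F a (G a)) top b) l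
          = olimsup (\<lambda>a. F a (G a) (oiter (F a (G a)) top ?p)) l"
        using nb True by (simp add: oiter_unfold[of _ _ b])
      also have "\<dots> \<le> F l (olimsup G l) (olimsup (\<lambda>a. oiter (F a (G a)) top ?p) l)"
        by (rule push_apply)
      also have "\<dots> \<le> F l (olimsup G l) (oiter (F l (olimsup G l)) top ?p)"
        using less.IH[OF True] F_mono by (simp add: monoD)
      also have "\<dots> = oiter (F l (olimsup G l)) top b"
        using nb True by (simp add: oiter_unfold[of _ _ b])
      finally show ?thesis .
    next
      case False
      have eqb: "Sup {..<b} = b" using False Sup_lessThan_le[of b] by simp
      have "olimsup (\<lambda>a. oiter (F a (G a)) top b) l \<le> (INF g\<in>{..<b}. oiter (F l (olimsup G l)) top g)"
      proof (rule INF_greatest)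
        fix g assume g: "g \<in> {..<b}"
        have "olimsup (\<lambda>a. oiter (F a (G a)) top b) l \<le> olimsup (\<lambda>a. oiter (F a (G a)) top g) l"
          using g by (intro olimsup_mono[OF bl] oiter_antimono F_mono) auto
        also have "\<dots> \<le> oiter (F l (olimsup G l)) top g" using less.IH g by simp
        finally show "olimsup (\<lambda>a. oiter (F a (G a)) top b) l \<le> oiter (F l (olimsup G l)) top g" .
      qed
      also have "\<dots> \<le> oiter (F l (olimsup G l)) top (Sup {..<b})"
        using nb by (intro oiter_Sup F_mono) (auto simp: bot.not_eq_extremum)
      finally show ?thesis using eqb by simp
    qed
  qed
qed

lemma lemD:
  "olimsup (\<lambda>a. oiter (F a (G a)) top (oadd a b)) l \<le> oiter (F l (olimsup G l)) top (oadd l b)"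
proof (induction b rule: less_induct)
  case (less b)
  have bl: "bot < l" using nzl_props[OF nzl] by simp
  let ?H = "F l (olimsup G l)"
  show ?case
  proof (cases "b = bot")
    case True
    have "olimsup (\<lambda>a. oiter (F a (G a)) top a) l \<le> (INF g\<in>{..<l}. oiter ?H top g)"
    proof (rule INF_greatest)
      fix g assume g: "g \<in> {..<l}"
      have "olimsup (\<lambda>a. oiter (F a (G a)) top a) l \<le> olimsup (\<lambda>a. oiter (F a (G a)) top g) l"
        using g by (intro olimsup_tail_mono[of g] oiter_antimono F_mono) auto
      also have "\<dots> \<le> oiter ?H top g" by (rule lemK)
      finally show "olimsup (\<lambda>a. oiter (F a (G a)) top a) l \<le> oiter ?H top g" .
    qed
    also have "\<dots> \<le> oiter ?H top (Sup {..<l})"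
      using bl by (intro oiter_Sup F_mono) auto
    finally show ?thesis using True nzl_props[OF nzl] by (simp add: oadd_unfold[of _ b])
  next
    case nb: False
    show ?thesis
    proof (cases "Sup {..<b} < b")
      case True
      let ?p = "Sup {..<b}"
      have ob: "\<And>a. oadd a b = osuc (oadd a ?p)" using nb True by (simp add: oadd_unfold[of _ b])
      show ?thesis
      proof (cases "oadd l ?p = top")
        case top: True
        have "olimsup (\<lambda>a. oiter (F a (G a)) top (oadd a b)) l
            \<le> olimsup (\<lambda>a. oiter (F a (G a)) top (oadd a ?p)) l"
          unfolding ob by (intro olimsup_mono[OF bl] oiter_antimono F_mono le_osuc)
        also have "\<dots> \<le> oiter ?H top (oadd l ?p)" by (rule less.IH[OF True])
        also have "\<dots> = oiter ?H top (oadd l b)" unfolding ob top osuc_top ..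
        finally show ?thesis .
      next
        case ntop: False
        have nt: "\<And>a. a < l \<Longrightarrow> oadd a ?p \<noteq> top"
          using ntop oadd_mono1 by (metis order.strict_implies_order top.extremum_unique)
        have "olimsup (\<lambda>a. oiter (F a (G a)) top (oadd a b)) l
            = olimsup (\<lambda>a. F a (G a) (oiter (F a (G a)) top (oadd a ?p))) l"
          unfolding ob by (intro olimsup_cong) (simp add: oiter_osuc nt)
        also have "\<dots> \<le> ?H (olimsup (\<lambda>a. oiter (F a (G a)) top (oadd a ?p)) l)"
          by (rule push_apply)
        also have "\<dots> \<le> ?H (oiter ?H top (oadd l ?p))"
          using less.IH[OF True] F_mono by (simp add: monoD)
        also have "\<dots> = oiter ?H top (oadd l b)"
          unfolding ob by (simp add: oiter_osuc ntop)
        finally show ?thesis .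
      qed
    next
      case False
      have ob: "\<And>a. oadd a b = Sup (oadd a ` {..<b})" using nb False by (simp add: oadd_unfold[of _ b])
      have "olimsup (\<lambda>a. oiter (F a (G a)) top (oadd a b)) l \<le> (INF d\<in>oadd l ` {..<b}. oiter ?H top d)"
      proof (rule INF_greatest)
        fix d assume "d \<in> oadd l ` {..<b}"
        then obtain g where g: "g < b" "d = oadd l g" by auto
        have "olimsup (\<lambda>a. oiter (F a (G a)) top (oadd a b)) l \<le> olimsup (\<lambda>a. oiter (F a (G a)) top (oadd a g)) l"
          unfolding ob using g by (intro olimsup_mono[OF bl] oiter_antimono F_mono SUP_upper) auto
        also have "\<dots> \<le> oiter ?H top d" using less.IH g by simp
        finally show "olimsup (\<lambda>a. oiter (F a (G a)) top (oadd a b)) l \<le> oiter ?H top d" .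
      qed
      also have "\<dots> \<le> oiter ?H top (oadd l b)"
        unfolding ob[of l] using nb by (intro oiter_Sup F_mono) (auto simp: bot.not_eq_extremum)
      finally show ?thesis .
    qed
  qed
qed

end


theorem theorem4p15:
  fixes F :: "'o::{complete_linorder,wellorder} \<Rightarrow> 'g::complete_lattice \<Rightarrow> 'l::complete_lattice \<Rightarrow> 'l"
    and phi :: "'o \<Rightarrow> 'o"
  assumes F_mono: "\<And>a G. mono (F a G)"
    and push: "limsup_pushable (\<lambda>a (p :: 'g \<times> 'l). F a (fst p) (snd p))"
    and phi_mono: "mono phi"
  shows "\<forall>l (G :: 'o \<Rightarrow> 'g). nonzero_limit l \<longrightarrow>
           olimsup (\<lambda>a. onu (phi a) (F a (G a))) l \<le> onu (oliminf phi l) (F l (olimsup G l))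
         \<and> (affine phi \<longrightarrow>
              olimsup (\<lambda>a. onu (phi a) (F a (G a))) l \<le> onu (phi l) (F l (olimsup G l)))"
proof (intro allI impI)
  fix l :: 'o and G :: "'o \<Rightarrow> 'g"
  assume nzl: "nonzero_limit l"
  have bl: "bot < l" using nzl_props[OF nzl] by simp
  let ?H = "F l (olimsup G l)"
  have P1: "olimsup (\<lambda>a. onu (phi a) (F a (G a))) l \<le> onu (oliminf phi l) ?H"
  proof -
    have "olimsup (\<lambda>a. onu (phi a) (F a (G a))) l \<le> (INF d\<in>phi ` {..<l}. oiter ?H top d)"
    proof (rule INF_greatest)
      fix d assume "d \<in> phi ` {..<l}"
      then obtain a0 where a0: "a0 < l" "d = phi a0" by auto
      have "olimsup (\<lambda>a. onu (phi a) (F a (G a))) l \<le> olimsup (\<lambda>a. oiter (F a (G a)) top d) l"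
        unfolding onu_def a0(2) using a0(1) phi_mono
        by (intro olimsup_tail_mono[of a0] oiter_antimono F_mono) (auto simp: mono_def)
      also have "\<dots> \<le> oiter ?H top d" by (rule lemK[OF F_mono push nzl])
      finally show "olimsup (\<lambda>a. onu (phi a) (F a (G a))) l \<le> oiter ?H top d" .
    qed
    also have "\<dots> \<le> oiter ?H top (Sup (phi ` {..<l}))"
      using bl by (intro oiter_Sup F_mono) auto
    finally show ?thesis unfolding onu_def oliminf_mono_eq[OF phi_mono bl] .
  qed
  moreover have "affine phi \<Longrightarrow> olimsup (\<lambda>a. onu (phi a) (F a (G a))) l \<le> onu (phi l) ?H"
  proof -
    assume "affine phi"
    then obtain b :: nat and beta where b: "b \<in> {0,1}"
      and ph: "phi = (\<lambda>a. if b = 0 then beta else oadd a beta)"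
      unfolding affine_def by blast
    show ?thesis
    proof (cases "b = 0")
      case True
      then have ph0: "phi = (\<lambda>_. beta)" using ph by simp
      have "Sup (phi ` {..<l}) = beta" unfolding ph0 using bl by (subst SUP_const) auto
      then have "oliminf phi l = beta" using oliminf_mono_eq[OF phi_mono bl] by simp
      then show ?thesis using P1 ph0 by simp
    next
      case False
      then have ph1: "phi = (\<lambda>a. oadd a beta)" using ph by simp
      show ?thesis unfolding ph1 onu_def by (rule lemD[OF F_mono push nzl])
    qed
  qed
  ultimately show "olimsup (\<lambda>a. onu (phi a) (F a (G a))) l \<le> onu (oliminf phi l) ?H
         \<and> (affine phi \<longrightarrow> olimsup (\<lambda>a. onu (phi a) (F a (G a))) l \<le> onu (phi l) ?H)" by blast
qed

end
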